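(* Let $G=(V,E)$ be a finite simple graph with $n=|V|$ vertices, and let $\mathbf{L}=\mathbf{D}-\mathbf{A}\in\mathbb{R}^{n\times n}$ be its graph Laplacian. Let $\phi_1,\dots,\phi_n$ be an orthonormal basis of $\mathbb{R}^n$ consisting of eigenvectors of $\mathbf{L}$, with $\mathbf{L}\phi_i=\lambda_i\phi_i$ and $0\le\lambda_1\le\cdots\le\lambda_n$. Let $T>0$, $\varepsilon\in(0,1)$, $M_\varepsilon>0$, and set $\Theta(\varepsilon)=\{i\in\{1,\dots,n\}:\lambda_i\le M_\varepsilon\}$. Let $U_T,U_T^\varepsilon\in\mathbb{R}^n$ satisfy $\|U_T-U_T^\varepsilon\|\le\varepsilon$. Let $$U(t)=\sum_{i=1}^n e^{\lambda_i(T-t)}\langle U_T,\phi_i\rangle\,\phi_i\quad(t\in[0,T])$$ be the solution of $\frac{dU}{dt}(t)+\mathbf{L}U(t)=0$ with $U(T)=U_T$, and define $$\mathbf{P}^{\varepsilon}U^\varepsilon(t)=\sum_{i\in\Theta(\varepsilon)}e^{\lambda_i(T-t)}\langle U_T^\varepsilon,\phi_i\rangle\,\phi_i .$$ Then for every $t\in[0,T]$, $$\|U(t)-\mathbf{P}^{\varepsilon}U^\varepsilon(t)\|\le M_\varepsilon^{-1}\Big\|\frac{d}{dt}U(t)\Big\|+e^{M_\varepsilon(T-t)}\varepsilon .$$ Furthermore, if $M_\varepsilon=\frac{1}{T}\ln(\varepsilon^{-\gamma})$ with $\gamma\in(0,1)$, then for every $t\in[0,T]$, $$\|U(t)-\mathbf{P}^{\varepsilon}U^\varepsilon(t)\|\le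 \frac{T}{\ln(\varepsilon^{-\gamma})}\Big\|\frac{d}{dt}U(t)\Big\|+\varepsilon^{1-\gamma\left(1-\frac{t}{T}\right)}.$$
   Context: $\mathbf{A}$ is the adjacency matrix ($A_{ij}=1$ if $\{x_i,x_j\}\in E$, else $0$), $\mathbf{D}$ is the diagonal degree matrix with $D_{ii}=\sum_j A_{ij}$. $\langle A,B\rangle=A^{\mathrm T}B$ is the standard inner product on $\mathbb{R}^n$ and $\|\cdot\|$ the Euclidean norm. $\mathbf{P}^\varepsilon U^\varepsilon(t)$ is the cut-off (truncated spectral) regularized approximation of $U(t)$ computed from noisy terminal data $U_T^\varepsilon$; $M_\varepsilon$ is the regularization parameter. *)

theory Defs
  imports "HOL-Analysis.Analysis"
begin

definition simple_graph :: "('n \<Rightarrow> 'n \<Rightarrow> bool) \<Rightarrow> bool" where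
  "simple_graph E \<longleftrightarrow> (\<forall>x y. E x y \<longrightarrow> E y x) \<and> (\<forall>x. \<not> E x x)"

definition adj_matrix :: "('n::finite \<Rightarrow> 'n \<Rightarrow> bool) \<Rightarrow> real^'n^'n" where
  "adj_matrix E = (\<chi> i j. if E i j then 1 else 0)"

definition deg_matrix :: "('n::finite \<Rightarrow> 'n \<Rightarrow> bool) \<Rightarrow> real^'n^'n" where
  "deg_matrix E = (\<chi> i j. if i = j then (\<Sum>k\<in>UNIV. adj_matrix E $ i $ k) else 0)"

definition laplacian :: "('n::finite \<Rightarrow> 'n \<Rightarrow> bool) \<Rightarrow> real^'n^'n" where
  "laplacian E = deg_matrix E - adj_matrix E"

definition heat_back :: "nat \<Rightarrow> (nat \<Rightarrow> real) \<Rightarrow> (nat \<Rightarrow> real^'n) \<Rightarrow> real \<Rightarrow> real^'n \<Rightarrow> real \<Rightarrow> real^'n" where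
  "heat_back n lam phi T UT t = (\<Sum>i\<in>{1..n}. (exp (lam i * (T - t)) * (UT \<bullet> phi i)) *\<^sub>R phi i)"

definition cutoff_approx :: "nat \<Rightarrow> (nat \<Rightarrow> real) \<Rightarrow> (nat \<Rightarrow> real^'n) \<Rightarrow> real \<Rightarrow> real \<Rightarrow> real^'n \<Rightarrow> real \<Rightarrow> real^'n" where
  "cutoff_approx n lam phi T M UTe t =
     (\<Sum>i\<in>{i\<in>{1..n}. lam i \<le> M}. (exp (lam i * (T - t)) * (UTe \<bullet> phi i)) *\<^sub>R phi i)"

end

theory Submission
  imports Defs
begin

lemma orth_norm_sq:
  fixes phi :: "nat \<Rightarrow> 'a::real_inner"
  assumes fin: "finite I" and orth: "\<forall>i\<in>I. \<forall>j\<in>I. phi i \<bullet> phi j = (if i = j then 1 else 0)"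
    and S: "S \<subseteq> I"
  shows "(norm (\<Sum>i\<in>S. c i *\<^sub>R phi i))\<^sup>2 = (\<Sum>i\<in>S. (c i)\<^sup>2)"
proof -
  have "(norm (\<Sum>i\<in>S. c i *\<^sub>R phi i))\<^sup>2 = (\<Sum>i\<in>S. c i *\<^sub>R phi i) \<bullet> (\<Sum>j\<in>S. c j *\<^sub>R phi j)"
    by (simp add: power2_norm_eq_inner)
  also have "\<dots> = (\<Sum>j\<in>S. \<Sum>i\<in>S. c i * c j * (phi i \<bullet> phi j))"
    by (simp add: inner_sum_left inner_sum_right sum_distrib_left mult_ac)
  also have "\<dots> = (\<Sum>j\<in>S. \<Sum>i\<in>S. if i = j then c i * c j else 0)"
  proof -
    have o: "i \<in> S \<Longrightarrow> j \<in> S \<Longrightarrow> phi i \<bullet> phi j = (if i = j then 1 else 0)" for i j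
      using orth S by blast
    show ?thesis by (intro sum.cong refl) (simp add: o)
  qed
  also have "\<dots> = (\<Sum>i\<in>S. (c i)\<^sup>2)"
    using finite_subset[OF S fin] by (simp add: power2_eq_square)
  finally show ?thesis .
qed

lemma bessel:
  fixes phi :: "nat \<Rightarrow> 'a::real_inner"
  assumes fin: "finite I" and orth: "\<forall>i\<in>I. \<forall>j\<in>I. phi i \<bullet> phi j = (if i = j then 1 else 0)"
    and S: "S \<subseteq> I"
  shows "(\<Sum>i\<in>S. (d \<bullet> phi i)\<^sup>2) \<le> (norm d)\<^sup>2"
proof -
  define p where "p = (\<Sum>i\<in>S. (d \<bullet> phi i) *\<^sub>R phi i)"
  have pp: "(norm p)\<^sup>2 = (\<Sum>i\<in>S. (d \<bullet> phi i)\<^sup>2)"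
    unfolding p_def by (rule orth_norm_sq[OF fin orth S])
  have dp: "d \<bullet> p = (\<Sum>i\<in>S. (d \<bullet> phi i)\<^sup>2)"
    unfolding p_def by (simp add: inner_sum_right power2_eq_square)
  have "0 \<le> (norm (d - p))\<^sup>2" by simp
  also have "\<dots> = (norm d)\<^sup>2 - 2 * (d \<bullet> p) + (norm p)\<^sup>2"
    by (simp add: power2_norm_eq_inner inner_diff_left inner_diff_right inner_commute)
  finally show ?thesis using pp dp by simp
qed

theorem theorem4:
  fixes E :: "'n::finite \<Rightarrow> 'n \<Rightarrow> bool"
    and phi :: "nat \<Rightarrow> real^'n" and lam :: "nat \<Rightarrow> real"
    and T eps M gamma :: real and UT UTe :: "real^'n"
  assumes "simple_graph E"
    and orthonormal: "\<forall>i\<in>{1..CARD('n)}. \<forall>j\<in>{1..CARD('n)}. phi i \<bullet> phi j = (if i = j then 1 else 0)"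
    and eigen: "\<forall>i\<in>{1..CARD('n)}. laplacian E *v phi i = lam i *\<^sub>R phi i"
    and lam_nonneg: "0 \<le> lam 1"
    and lam_sorted: "\<forall>i j. 1 \<le> i \<longrightarrow> i \<le> j \<longrightarrow> j \<le> CARD('n) \<longrightarrow> lam i \<le> lam j"
    and "T > 0" and "0 < eps" and "eps < 1" and "M > 0"
    and "norm (UT - UTe) \<le> eps"
  shows "(\<forall>t\<in>{0..T}.
            norm (heat_back CARD('n) lam phi T UT t - cutoff_approx CARD('n) lam phi T M UTe t)
              \<le> inverse M * norm (vector_derivative (heat_back CARD('n) lam phi T UT) (at t))
                + exp (M * (T - t)) * eps)
       \<and> ((0 < gamma \<and> gamma < 1 \<and> M = (1 / T) * ln (eps powr (- gamma))) \<longrightarrow>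
          (\<forall>t\<in>{0..T}.
            norm (heat_back CARD('n) lam phi T UT t - cutoff_approx CARD('n) lam phi T M UTe t)
              \<le> T / ln (eps powr (- gamma)) * norm (vector_derivative (heat_back CARD('n) lam phi T UT) (at t))
                + eps powr (1 - gamma * (1 - t / T))))"
proof -
  define N where "N = CARD('n)"
  define I where "I = {1..N}"
  have finI: "finite I" unfolding I_def by simp
  have orth: "\<forall>i\<in>I. \<forall>j\<in>I. phi i \<bullet> phi j = (if i = j then 1 else 0)"
    using orthonormal unfolding I_def N_def by blast
  define Th where "Th = {i\<in>I. lam i \<le> M}"
  define S' where "S' = {i\<in>I. \<not> lam i \<le> M}"
  have ThI: "Th \<subseteq> I" and S'I: "S' \<subseteq> I" unfolding Th_def S'_def by auto
  have IU: "I = Th \<union> S'" and disj: "Th \<inter> S' = {}" unfolding Th_def S'_def by auto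
  define a where "a t i = exp (lam i * (T - t)) * (UT \<bullet> phi i)" for t i
  define D where "D t = (\<Sum>i\<in>I. (- lam i * a t i) *\<^sub>R phi i)" for t
  have deriv: "vector_derivative (heat_back N lam phi T UT) (at t) = D t" for t
  proof -
    have "(heat_back N lam phi T UT has_vector_derivative D t) (at t)"
      unfolding heat_back_def D_def a_def I_def
      by (rule has_vector_derivative_sum) (auto intro!: derivative_eq_intros)
    then show ?thesis by (rule vector_derivative_at)
  qed
  have main: "norm (heat_back N lam phi T UT t - cutoff_approx N lam phi T M UTe t)
              \<le> inverse M * norm (vector_derivative (heat_back N lam phi T UT) (at t))
                + exp (M * (T - t)) * eps" if t: "t \<in> {0..T}" for t
  proof -
    define X where "X = (\<Sum>i\<in>S'. a t i *\<^sub>R phi i)"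
    define Y where "Y = (\<Sum>i\<in>Th. (exp (lam i * (T - t)) * ((UT - UTe) \<bullet> phi i)) *\<^sub>R phi i)"
    have hb: "heat_back N lam phi T UT t = (\<Sum>i\<in>Th. a t i *\<^sub>R phi i) + X"
      unfolding heat_back_def X_def a_def I_def[symmetric] IU
      by (rule sum.union_disjoint) (use finI IU disj in auto)
    have ca: "cutoff_approx N lam phi T M UTe t = (\<Sum>i\<in>Th. (exp (lam i * (T - t)) * (UTe \<bullet> phi i)) *\<^sub>R phi i)"
      unfolding cutoff_approx_def Th_def I_def ..
    have eq: "heat_back N lam phi T UT t - cutoff_approx N lam phi T M UTe t = X + Y"
    proof -
      have "Y = (\<Sum>i\<in>Th. a t i *\<^sub>R phi i) - (\<Sum>i\<in>Th. (exp (lam i * (T - t)) * (UTe \<bullet> phi i)) *\<^sub>R phi i)"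
        unfolding Y_def a_def sum_subtractf[symmetric]
        by (intro sum.cong refl) (simp add: inner_diff_left algebra_simps)
      then show ?thesis unfolding hb ca by simp
    qed
    have X2: "(norm X)\<^sup>2 \<le> (inverse M * norm (D t))\<^sup>2"
    proof -
      have "(norm X)\<^sup>2 = (\<Sum>i\<in>S'. (a t i)\<^sup>2)"
        unfolding X_def by (rule orth_norm_sq[OF finI orth S'I])
      also have "\<dots> \<le> (\<Sum>i\<in>S'. (inverse M * (- lam i * a t i))\<^sup>2)"
      proof (rule sum_mono)
        fix i assume "i \<in> S'"
        then have "M < lam i" unfolding S'_def by auto
        then have "1 \<le> inverse M * lam i" using \<open>M > 0\<close> by (simp add: field_simps)
        then have "1 \<le> (inverse M * lam i)\<^sup>2" by (simp add: one_le_power)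
        then have "1 * (a t i)\<^sup>2 \<le> (inverse M * lam i)\<^sup>2 * (a t i)\<^sup>2"
          by (intro mult_right_mono) auto
        then show "(a t i)\<^sup>2 \<le> (inverse M * (- lam i * a t i))\<^sup>2"
          by (simp add: power_mult_distrib)
      qed
      also have "\<dots> \<le> (\<Sum>i\<in>I. (inverse M * (- lam i * a t i))\<^sup>2)"
        by (rule sum_mono2[OF finI S'I]) auto
      also have "\<dots> = (norm (\<Sum>i\<in>I. (inverse M * (- lam i * a t i)) *\<^sub>R phi i))\<^sup>2"
        by (rule orth_norm_sq[OF finI orth subset_refl, symmetric])
      also have "(\<Sum>i\<in>I. (inverse M * (- lam i * a t i)) *\<^sub>R phi i) = inverse M *\<^sub>R D t"
        unfolding D_def by (simp add: scaleR_sum_right)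
      also have "(norm (inverse M *\<^sub>R D t))\<^sup>2 = (inverse M * norm (D t))\<^sup>2"
        using \<open>M > 0\<close> by simp
      finally show ?thesis .
    qed
    have Xb: "norm X \<le> inverse M * norm (D t)"
      by (rule power2_le_imp_le[OF X2]) (use \<open>M > 0\<close> in simp)
    have Y2: "(norm Y)\<^sup>2 \<le> (exp (M * (T - t)) * eps)\<^sup>2"
    proof -
      have "(norm Y)\<^sup>2 = (\<Sum>i\<in>Th. (exp (lam i * (T - t)) * ((UT - UTe) \<bullet> phi i))\<^sup>2)"
        unfolding Y_def by (rule orth_norm_sq[OF finI orth ThI])
      also have "\<dots> \<le> (\<Sum>i\<in>Th. (exp (M * (T - t)))\<^sup>2 * ((UT - UTe) \<bullet> phi i)\<^sup>2)"
      proof (rule sum_mono)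
        fix i assume "i \<in> Th"
        then have "lam i \<le> M" unfolding Th_def by auto
        then have "lam i * (T - t) \<le> M * (T - t)" using t by (intro mult_right_mono) auto
        then have "exp (lam i * (T - t)) \<le> exp (M * (T - t))" by simp
        then have "(exp (lam i * (T - t)))\<^sup>2 \<le> (exp (M * (T - t)))\<^sup>2"
          by (intro power_mono) auto
        then show "(exp (lam i * (T - t)) * ((UT - UTe) \<bullet> phi i))\<^sup>2 \<le> (exp (M * (T - t)))\<^sup>2 * ((UT - UTe) \<bullet> phi i)\<^sup>2"
          by (simp add: power_mult_distrib mult_right_mono)
      qed
      also have "\<dots> = (exp (M * (T - t)))\<^sup>2 * (\<Sum>i\<in>Th. ((UT - UTe) \<bullet> phi i)\<^sup>2)"
        by (simp add: sum_distrib_left)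
      also have "\<dots> \<le> (exp (M * (T - t)))\<^sup>2 * (norm (UT - UTe))\<^sup>2"
        by (intro mult_left_mono bessel[OF finI orth ThI]) auto
      also have "\<dots> \<le> (exp (M * (T - t)))\<^sup>2 * eps\<^sup>2"
        using assms(10) by (intro mult_left_mono power_mono) auto
      finally show ?thesis by (simp add: power_mult_distrib)
    qed
    have Yb: "norm Y \<le> exp (M * (T - t)) * eps"
      by (rule power2_le_imp_le[OF Y2]) (use \<open>eps > 0\<close> in simp)
    show ?thesis unfolding eq deriv using norm_triangle_ineq[of X Y] Xb Yb by linarith
  qed
  show ?thesis
  proof (intro conjI impI ballI)
    fix t assume "t \<in> {0..T}"
    then show "norm (heat_back CARD('n) lam phi T UT t - cutoff_approx CARD('n) lam phi T M UTe t)
              \<le> inverse M * norm (vector_derivative (heat_back CARD('n) lam phi T UT) (at t))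
                + exp (M * (T - t)) * eps" using main unfolding N_def by blast
  next
    fix t assume g: "0 < gamma \<and> gamma < 1 \<and> M = 1 / T * ln (eps powr - gamma)" and t: "t \<in> {0..T}"
    have L: "ln (eps powr - gamma) = - gamma * ln eps" using \<open>eps > 0\<close> by (simp add: ln_powr)
    have invM: "inverse M = T / ln (eps powr - gamma)" using g by simp
    have MT: "M * T = - gamma * ln eps" using g L \<open>T > 0\<close> by simp
    have "M * (T - t) = (M * T) * (1 - t / T)" using \<open>T > 0\<close> by (simp add: field_simps)
    also have "\<dots> = (- gamma * (1 - t / T)) * ln eps" unfolding MT by simp
    finally have "exp (M * (T - t)) * eps = exp ((- gamma * (1 - t / T)) * ln eps) * exp (1 * ln eps)"
      using \<open>eps > 0\<close> by simp
    also have "\<dots> = eps powr (1 - gamma * (1 - t / T))"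
    proof -
      have e1: "exp ((- gamma * (1 - t / T)) * ln eps) = eps powr (- gamma * (1 - t / T))"
        using \<open>eps > 0\<close> by (simp add: powr_def)
      have e2: "exp (1 * ln eps) = eps powr 1" using \<open>eps > 0\<close> by simp
      have "eps powr (- gamma * (1 - t / T)) * eps powr 1 = eps powr (- gamma * (1 - t / T) + 1)"
        by (simp only: powr_add)
      then show ?thesis unfolding e1 e2 by (simp add: algebra_simps)
    qed
    finally have ex: "exp (M * (T - t)) * eps = eps powr (1 - gamma * (1 - t / T))" .
    show "norm (heat_back CARD('n) lam phi T UT t - cutoff_approx CARD('n) lam phi T M UTe t)
              \<le> T / ln (eps powr (- gamma)) * norm (vector_derivative (heat_back CARD('n) lam phi T UT) (at t))
                + eps powr (1 - gamma * (1 - t / T))"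
      using main[OF t] unfolding N_def invM ex .
  qed
qed

end
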